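(* Let $g>0$ and let $\hat\tau$ be a $\widehat{\mathbb{Z}}$-tropical type of genus $g$ inducing essential types, with $k_{\hat\tau}=b_1(\Gamma)+2\sum_{v\in V_+}g_v-|V_+|$. Then $k_{\hat\tau}=2g-1$ if and only if $\Gamma$ consists of a single internal vertex of genus $g$ together with some number (possibly zero) of external vertices of genus $0$, each joined to the internal vertex by a single edge.
   Context: A $\widehat{\mathbb{Z}}$-tropical type $\hat\tau$ consists of a graph $\Gamma$ (vertices $V$, edges $E$, $n$ legs) with genera $g_v\ge0$ satisfying $\sum_vg_v+b_1(\Gamma)=g$, degrees $d_v\in\mathbb{Z}$, a partition $V=V_0\sqcup V_+$ into external and internal vertices, and slopes $m_{\vec e}=-m_{\overleftarrow e}\in\widehat{\mathbb{Z}}$ satisfying balancing $d_v=\sum_{e\ni v}m_{\vec e}+\sum_{\text{legs }i\text{ at }v}c_i$ in $\widehat{\mathbb{Z}}$. It induces essential types if every edge joins a vertex of $V_0$ to a vertex of $V_+$ and every $v\in V_+$ has $g_v>0$. *)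

theory Defs
  imports Main
begin

text \<open>A finite multigraph: vertex set V, edge set E, each edge e oriented from
  src e to tgt e (the chosen orientation gives the half-edge \<open>e\<rightarrow>\<close>).\<close>

definition graph_connected :: "'v set \<Rightarrow> 'e set \<Rightarrow> ('e \<Rightarrow> 'v) \<Rightarrow> ('e \<Rightarrow> 'v) \<Rightarrow> bool" where
  "graph_connected V E src tgt \<longleftrightarrow>
     (\<forall>u\<in>V. \<forall>v\<in>V. (u, v) \<in> ({(src e, tgt e) | e. e \<in> E} \<union> {(tgt e, src e) | e. e \<in> E})\<^sup>*)"

definition betti1 :: "'v set \<Rightarrow> 'e set \<Rightarrow> int" where
  "betti1 V E = int (card E) - int (card V) + 1"

text \<open>Tropical type of genus g with n legs; slopes/contact orders take values in
  a commutative ring 'z (standing for \<open>\<widehat>\<int>\<close>); degrees are integers.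
  m e is the slope of e oriented src e \<rightarrow> tgt e, the opposite orientation has slope - m e.\<close>
definition tropical_type ::
  "'v set \<Rightarrow> 'v set \<Rightarrow> 'v set \<Rightarrow> 'e set \<Rightarrow> ('e \<Rightarrow> 'v) \<Rightarrow> ('e \<Rightarrow> 'v) \<Rightarrow> ('v \<Rightarrow> nat) \<Rightarrow> nat
   \<Rightarrow> nat \<Rightarrow> (nat \<Rightarrow> 'v) \<Rightarrow> (nat \<Rightarrow> 'z::comm_ring_1) \<Rightarrow> ('v \<Rightarrow> int) \<Rightarrow> ('e \<Rightarrow> 'z) \<Rightarrow> bool" where
  "tropical_type V V0 Vp E src tgt gen g n legv c d m \<longleftrightarrow>
     finite V \<and> finite E \<and> V \<noteq> {} \<and>
     V0 \<union> Vp = V \<and> V0 \<inter> Vp = {} \<and>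
     (\<forall>e\<in>E. src e \<in> V \<and> tgt e \<in> V) \<and>
     (\<forall>i<n. legv i \<in> V) \<and>
     graph_connected V E src tgt \<and>
     int (\<Sum>v\<in>V. gen v) + betti1 V E = int g \<and>
     (\<forall>v\<in>V. of_int (d v) =
        (\<Sum>e\<in>{e\<in>E. src e = v}. m e) + (\<Sum>e\<in>{e\<in>E. tgt e = v}. - m e)
        + (\<Sum>i\<in>{i. i < n \<and> legv i = v}. c i))"

definition induces_essential_types ::
  "'v set \<Rightarrow> 'v set \<Rightarrow> 'e set \<Rightarrow> ('e \<Rightarrow> 'v) \<Rightarrow> ('e \<Rightarrow> 'v) \<Rightarrow> ('v \<Rightarrow> nat) \<Rightarrow> bool" where
  "induces_essential_types V0 Vp E src tgt gen \<longleftrightarrow>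
     (\<forall>e\<in>E. (src e \<in> V0 \<and> tgt e \<in> Vp) \<or> (src e \<in> Vp \<and> tgt e \<in> V0)) \<and>
     (\<forall>v\<in>Vp. gen v > 0)"

definition k_type :: "'v set \<Rightarrow> 'v set \<Rightarrow> 'e set \<Rightarrow> ('v \<Rightarrow> nat) \<Rightarrow> int" where
  "k_type V Vp E gen = betti1 V E + 2 * int (\<Sum>v\<in>Vp. gen v) - int (card Vp)"

end

theory Submission
  imports Defs
begin

lemma empty_conn_card:
  assumes "graph_connected V {} src tgt" "finite V" "V \<noteq> {}"
  shows "card V = 1"
proof -
  obtain u where u: "u \<in> V" using assms by auto
  have rel: "({(src e, tgt e) | e. e \<in> {}} \<union> {(tgt e, src e) | e. e \<in> {}}) = {}" by simp
  have "\<forall>v\<in>V. v = u"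
  proof
    fix v assume v: "v \<in> V"
    have "(u, v) \<in> ({(src e, tgt e) | e. e \<in> {}} \<union> {(tgt e, src e) | e. e \<in> {}})\<^sup>*"
      using assms(1) u v unfolding graph_connected_def by blast
    then have "(u, v) \<in> {}\<^sup>*" unfolding rel .
    then show "v = u" by simp
  qed
  then have "V = {u}" using u by blast
  then show ?thesis by simp
qed

theorem lemma3p5p6:
  fixes V V0 Vp :: "'v set" and E :: "'e set" and src tgt :: "'e \<Rightarrow> 'v"
    and gen :: "'v \<Rightarrow> nat" and g n :: nat and legv :: "nat \<Rightarrow> 'v"
    and c :: "nat \<Rightarrow> 'z::comm_ring_1" and d :: "'v \<Rightarrow> int" and m :: "'e \<Rightarrow> 'z"
  assumes "g > 0"
    and "tropical_type V V0 Vp E src tgt gen g n legv c d m"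
    and "induces_essential_types V0 Vp E src tgt gen"
  shows "k_type V Vp E gen = 2 * int g - 1 \<longleftrightarrow>
    (\<exists>w. Vp = {w} \<and> gen w = g \<and>
       (\<forall>v\<in>V0. gen v = 0 \<and> card {e\<in>E. {src e, tgt e} = {v, w}} = 1))"
proof -
  have finV: "finite V" and finE: "finite E" and Vne: "V \<noteq> {}"
    and VU: "V0 \<union> Vp = V" and Vdis: "V0 \<inter> Vp = {}"
    and conn: "graph_connected V E src tgt"
    and geq: "int (\<Sum>v\<in>V. gen v) + betti1 V E = int g"
    using assms(2) unfolding tropical_type_def by (blast, blast, blast, blast, blast, blast, blast)
  have bip: "\<And>e. e \<in> E \<Longrightarrow> (src e \<in> V0 \<and> tgt e \<in> Vp) \<or> (src e \<in> Vp \<and> tgt e \<in> V0)"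
    using assms(3) unfolding induces_essential_types_def by blast
  have finV0: "finite V0" and finVp: "finite Vp" using finV VU by auto
  define G0 where "G0 = (\<Sum>v\<in>V0. gen v)"
  define Gp where "Gp = (\<Sum>v\<in>Vp. gen v)"
  have sumV: "(\<Sum>v\<in>V. gen v) = G0 + Gp"
    unfolding G0_def Gp_def by (metis VU Vdis finV0 finVp sum.union_disjoint)
  have cardV: "card V = card V0 + card Vp"
    by (metis VU Vdis finV0 finVp card_Un_disjoint)
  have b: "betti1 V E = int (card E) - int (card V0) - int (card Vp) + 1"
    unfolding betti1_def cardV by simp
  have keq: "k_type V Vp E gen = 2 * int g - 1 \<longleftrightarrow>
      2 * int G0 + int (card E) - int (card V0) = 0"
    using geq unfolding k_type_def b sumV Gp_def[symmetric] by auto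
  define R where "R = {(src e, tgt e) | e. e \<in> E} \<union> {(tgt e, src e) | e. e \<in> E}"
  have connR: "\<And>u v. u \<in> V \<Longrightarrow> v \<in> V \<Longrightarrow> (u, v) \<in> R\<^sup>*"
    using conn unfolding graph_connected_def R_def by blast
  define f where "f e = (if src e \<in> V0 then src e else tgt e)" for e
  define h where "h e = (if src e \<in> V0 then tgt e else src e)" for e
  have fV0: "\<And>e. e \<in> E \<Longrightarrow> f e \<in> V0" and hVp: "\<And>e. e \<in> E \<Longrightarrow> h e \<in> Vp"
    using bip Vdis unfolding f_def h_def by auto
  have fh: "\<And>e. e \<in> E \<Longrightarrow> {src e, tgt e} = {f e, h e}" unfolding f_def h_def by auto
  show ?thesis
  proof
    assume "k_type V Vp E gen = 2 * int g - 1"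
    then have E0: "2 * int G0 + int (card E) - int (card V0) = 0" using keq by simp
    show "\<exists>w. Vp = {w} \<and> gen w = g \<and>
       (\<forall>v\<in>V0. gen v = 0 \<and> card {e\<in>E. {src e, tgt e} = {v, w}} = 1)"
    proof (cases "E = {}")
      case True
      then have cV: "card V = 1" using empty_conn_card[OF _ finV Vne] conn by simp
      have "card V0 \<le> 1" using cV cardV by simp
      then have "card V0 = 0" using E0 True by (simp, presburger)
      then have V0e: "V0 = {}" using finV0 by simp
      then have "card Vp = 1" using cV cardV by simp
      then obtain w where w: "Vp = {w}" using card_1_singletonE by blast
      have "G0 = 0" using V0e G0_def by simp
      then have "gen w = g" using geq sumV b True V0e w Gp_def by simp
      then show ?thesis using w V0e by auto
    next
      case False
      then obtain e0 where e0: "e0 \<in> E" by auto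
      obtain w where w: "w \<in> Vp" using hVp e0 by auto
      have surj: "V0 \<subseteq> f ` E"
      proof
        fix v assume v: "v \<in> V0"
        have "(v, w) \<in> R\<^sup>*" using connR v w VU by auto
        moreover have "v \<noteq> w" using v w Vdis by auto
        ultimately obtain y where "(v, y) \<in> R" by (meson converse_rtranclE)
        then obtain e where e: "e \<in> E" "v = src e \<or> v = tgt e" unfolding R_def by auto
        then have "f e = v" using v Vdis bip[OF e(1)] unfolding f_def by auto
        then show "v \<in> f ` E" using e by auto
      qed
      have "card V0 \<le> card E" using surj finE surj_card_le by blast
      then have G00: "G0 = 0" and cE: "card E = card V0" using E0 by auto
      have fimg: "f ` E = V0" using surj fV0 by auto
      have inj: "inj_on f E"
        using eq_card_imp_inj_on[OF finE, of f] fimg cE by simp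
      define S where "S = insert w {v\<in>V0. \<exists>e\<in>E. f e = v \<and> h e = w}"
      have closed: "(w, x) \<in> R\<^sup>* \<Longrightarrow> x \<in> S" for x
      proof (induction rule: rtrancl_induct)
        case base then show ?case unfolding S_def by simp
      next
        case (step x y)
        from step(2) obtain e' where e'0: "e' \<in> E" "{x, y} = {src e', tgt e'}"
          unfolding R_def by auto
        then have e': "e' \<in> E" "{x, y} = {f e', h e'}" using fh[OF e'0(1)] by auto
        show ?case
        proof (cases "x = w")
          case True
          have "x \<noteq> f e'" using True w Vdis fV0[OF e'(1)] by auto
          then have "x = h e'" "y = f e'" using e'(2) by (auto simp: doubleton_eq_iff)
          then show ?thesis using True e' fV0 unfolding S_def by auto
        next
          case False
          then obtain e where e: "e \<in> E" "f e = x" "h e = w" "x \<in> V0"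
            using step(3) unfolding S_def by auto
          have "x \<noteq> h e'" using e(4) hVp[OF e'(1)] Vdis by auto
          then have "x = f e'" "y = h e'" using e'(2) by (auto simp: doubleton_eq_iff)
          then have "e' = e" using inj e e'(1) by (metis inj_on_def)
          then show ?thesis using e \<open>y = h e'\<close> unfolding S_def by auto
        qed
      qed
      have VS: "V \<subseteq> S" using connR w VU closed by auto
      have Vpw: "Vp = {w}" using VS w Vdis VU unfolding S_def by auto
      have gw: "gen w = g" using geq sumV b cE G00 Vpw Gp_def by simp
      have "\<forall>v\<in>V0. gen v = 0" using G00 finV0 G0_def by simp
      moreover have "card {e\<in>E. {src e, tgt e} = {v, w}} = 1" if v: "v \<in> V0" for v
      proof -
        obtain e where e: "e \<in> E" "f e = v" using v fimg by auto
        have "{e\<in>E. {src e, tgt e} = {v, w}} = {e}"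
        proof (rule set_eqI, rule iffI)
          fix e' assume "e' \<in> {e\<in>E. {src e, tgt e} = {v, w}}"
          then have e': "e' \<in> E" "{f e', h e'} = {v, w}" using fh by auto
          have "v \<noteq> h e'" using v hVp[OF e'(1)] Vdis by auto
          then have "f e' = v" using e'(2) by (auto simp: doubleton_eq_iff)
          then show "e' \<in> {e}" using inj e e'(1) by (simp add: inj_on_def)
        next
          fix e' assume "e' \<in> {e}"
          then show "e' \<in> {e\<in>E. {src e, tgt e} = {v, w}}"
            using e fh[OF e(1)] hVp[OF e(1)] Vpw by auto
        qed
        then show ?thesis by simp
      qed
      ultimately show ?thesis using Vpw gw by auto
    qed
  next
    assume "\<exists>w. Vp = {w} \<and> gen w = g \<and>
       (\<forall>v\<in>V0. gen v = 0 \<and> card {e\<in>E. {src e, tgt e} = {v, w}} = 1)"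
    then obtain w where w: "Vp = {w}" "gen w = g" "\<forall>v\<in>V0. gen v = 0" by auto
    have "G0 = 0" using w(3) G0_def by simp
    moreover have "Gp = g" using w Gp_def by simp
    ultimately have "betti1 V E = 0" using geq sumV by simp
    then show "k_type V Vp E gen = 2 * int g - 1"
      unfolding k_type_def using w by simp
  qed
qed

end
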